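(* Let $G$ be a finite undirected graph (loops allowed). Then the barycentric subdivision ${\rm Bd}(\mathcal N(G))$ collapses (by a finite sequence of elementary collapses) onto its subcomplex $\mathcal{L}o(G)$. In particular, $\mathcal N(G)$ and $\mathcal{L}o(G)$ have the same simple homotopy type.
   Context: For a vertex $v$ of $G$, $N(v)$ is the set of neighbors of $v$; for $S\subseteq V(G)$, $N(S)=\bigcap_{v\in S}N(v)$ is the set of common neighbors of the vertices of $S$. The neighborhood complex $\mathcal N(G)$ is the simplicial complex whose vertices are the non-isolated vertices of $G$ and whose simplices are the nonempty subsets $S\subseteq V(G)$ with $N(S)\neq\emptyset$. $\mathcal F(X)$ denotes the face poset of a complex $X$ (nonempty faces ordered by inclusion), ${\rm Bd}(X)=\Delta(\mathcal F(X))$ the barycentric subdivision, and $\Delta(Q)$ the order complex of a poset $Q$ (simplices are the nonempty chains of $Q$). The Lovász complex is $\mathcal{L}o(G)=\Delta(N(\mathcal F(\mathcal N(G))))$, the order complex of the subposet $\{N(S): S\in\mathcal F(\mathcal N(G))\}\subseteq \mathcal F(\mathcal N(G))$ ordered by inclusion; it is a subcomplex of ${\rm Bd}(\mathcal N(G))$. Two complexes have the same simple homotopy type if they are connected by a finite sequence of elementary collapses and elementary expansions. *)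

theory Defs
  imports Main
begin

definition finite_graph :: "'a set \<Rightarrow> ('a \<Rightarrow> 'a \<Rightarrow> bool) \<Rightarrow> bool" where
  "finite_graph V E \<longleftrightarrow> finite V \<and> (\<forall>u v. E u v \<longrightarrow> u \<in> V \<and> v \<in> V) \<and> (\<forall>u v. E u v \<longrightarrow> E v u)"

definition common_nbhd :: "'a set \<Rightarrow> ('a \<Rightarrow> 'a \<Rightarrow> bool) \<Rightarrow> 'a set \<Rightarrow> 'a set" where
  "common_nbhd V E S = {u \<in> V. \<forall>v\<in>S. E v u}"

text \<open>Abstract simplicial complexes are represented by their sets of nonempty faces.\<close>
definition simplicial_complex :: "'a set set \<Rightarrow> bool" where
  "simplicial_complex K \<longleftrightarrow> finite K \<and>
     (\<forall>\<sigma>\<in>K. finite \<sigma> \<and> \<sigma> \<noteq> {} \<and> (\<forall>\<tau>. \<tau> \<noteq> {} \<and> \<tau> \<subseteq> \<sigma> \<longrightarrow> \<tau> \<in> K))"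

definition neighborhood_complex :: "'a set \<Rightarrow> ('a \<Rightarrow> 'a \<Rightarrow> bool) \<Rightarrow> 'a set set" where
  "neighborhood_complex V E = {S. S \<noteq> {} \<and> S \<subseteq> V \<and> common_nbhd V E S \<noteq> {}}"

definition order_complex :: "'a set set \<Rightarrow> 'a set set set" where
  "order_complex P = {c. c \<noteq> {} \<and> finite c \<and> c \<subseteq> P \<and> (\<forall>x\<in>c. \<forall>y\<in>c. x \<subseteq> y \<or> y \<subseteq> x)}"

text \<open>Face poset of a complex = its set of nonempty faces ordered by inclusion;
barycentric subdivision Bd(X) = order complex of the face poset.\<close>
definition face_poset :: "'a set set \<Rightarrow> 'a set set" where
  "face_poset X = X"

definition barycentric_subdivision :: "'a set set \<Rightarrow> 'a set set set" where
  "barycentric_subdivision X = order_complex (face_poset X)"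

definition lovasz_complex :: "'a set \<Rightarrow> ('a \<Rightarrow> 'a \<Rightarrow> bool) \<Rightarrow> 'a set set set" where
  "lovasz_complex V E = order_complex (common_nbhd V E ` face_poset (neighborhood_complex V E))"

definition elementary_collapse :: "'a set set \<Rightarrow> 'a set set \<Rightarrow> bool" where
  "elementary_collapse K L \<longleftrightarrow> simplicial_complex K \<and>
     (\<exists>\<sigma> \<tau>. \<sigma> \<in> K \<and> \<tau> \<in> K \<and> \<tau> \<subset> \<sigma> \<and> card \<sigma> = Suc (card \<tau>) \<and>
        (\<forall>\<rho>\<in>K. \<tau> \<subseteq> \<rho> \<longrightarrow> \<rho> = \<tau> \<or> \<rho> = \<sigma>) \<and> L = K - {\<sigma>, \<tau>})"

definition collapses :: "'a set set \<Rightarrow> 'a set set \<Rightarrow> bool" where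
  "collapses K L \<longleftrightarrow> (elementary_collapse)\<^sup>*\<^sup>* K L"

text \<open>Same simple homotopy type (up to relabelling of vertices): after injectively
relabelling the vertices of both complexes by natural numbers, the complexes are
connected by a finite sequence of elementary collapses and expansions.\<close>
definition simple_homotopy_equivalent :: "'a set set \<Rightarrow> 'b set set \<Rightarrow> bool" where
  "simple_homotopy_equivalent K L \<longleftrightarrow>
     (\<exists>(f :: 'a \<Rightarrow> nat) (g :: 'b \<Rightarrow> nat). inj_on f (\<Union>K) \<and> inj_on g (\<Union>L) \<and>
        (\<lambda>A B. elementary_collapse A B \<or> elementary_collapse B A)\<^sup>*\<^sup>* ((`) f ` K) ((`) g ` L))"

end

theory Submission
  imports Defs "HOL-Library.Product_Lexorder"
begin

lemma collapses_trans: "collapses A B \<Longrightarrow> collapses B C \<Longrightarrow> collapses A C"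
  unfolding collapses_def by (rule rtranclp_trans)

lemma ec_subset: "elementary_collapse K L \<Longrightarrow> L \<subseteq> K"
  unfolding elementary_collapse_def by auto

lemma collapses_subset: "collapses K L \<Longrightarrow> L \<subseteq> K"
  unfolding collapses_def by (induction rule: rtranclp_induct) (auto dest: ec_subset)

lemma sc_down: "simplicial_complex K \<Longrightarrow> s \<in> K \<Longrightarrow> t \<noteq> {} \<Longrightarrow> t \<subseteq> s \<Longrightarrow> t \<in> K"
  unfolding simplicial_complex_def by blast

lemma sc_finite: "simplicial_complex K \<Longrightarrow> finite K"
  unfolding simplicial_complex_def by blast

lemma sc_face: "simplicial_complex K \<Longrightarrow> s \<in> K \<Longrightarrow> finite s \<and> s \<noteq> {}"
  unfolding simplicial_complex_def by blast

lemma sc_intro: "finite K \<Longrightarrow> (\<And>s. s \<in> K \<Longrightarrow> finite s) \<Longrightarrow> (\<And>s. s \<in> K \<Longrightarrow> s \<noteq> {})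
  \<Longrightarrow> (\<And>s t. s \<in> K \<Longrightarrow> t \<noteq> {} \<Longrightarrow> t \<subseteq> s \<Longrightarrow> t \<in> K) \<Longrightarrow> simplicial_complex K"
  unfolding simplicial_complex_def by blast

lemma matching_collapse:
  fixes K U :: "'x set set" and p :: "'x set \<Rightarrow> 'x set" and r :: "'x set \<Rightarrow> 'b::linorder"
  assumes "simplicial_complex K" "U \<subseteq> K"
    "\<forall>\<tau>\<in>U. p \<tau> \<in> K \<and> \<tau> \<subset> p \<tau> \<and> card (p \<tau>) = Suc (card \<tau>) \<and> p \<tau> \<notin> U"
    "inj_on p U"
    "\<forall>\<rho>\<in>U \<union> p`U. \<forall>\<rho>'\<in>K. \<rho> \<subseteq> \<rho>' \<longrightarrow> \<rho>' \<in> U \<union> p`U"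
    "\<forall>\<tau>\<in>U. \<forall>\<tau>'\<in>U. \<tau> \<subset> \<tau>' \<or> (\<tau> \<subset> p \<tau>' \<and> \<tau> \<noteq> \<tau>') \<longrightarrow> r \<tau> < r \<tau>'"
  shows "collapses K (K - (U \<union> p`U))"
  using assms
proof (induction "card U" arbitrary: K U rule: less_induct)
  case less
  note sc = less.prems(1) and UK = less.prems(2) and pU = less.prems(3) and inj = less.prems(4)
    and up = less.prems(5) and rk = less.prems(6)
  have finK: "finite K" using sc by (rule sc_finite)
  have finU: "finite U" using finK UK finite_subset by blast
  show ?case
  proof (cases "U = {}")
    case True then show ?thesis by (simp add: collapses_def)
  next
    case False
    define m where "m = Max (r ` U)"
    have "m \<in> r ` U" using finU False m_def by simp
    then obtain \<tau> where \<tau>U: "\<tau> \<in> U" and "r \<tau> = m" by auto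
    have \<tau>max: "\<forall>\<tau>'\<in>U. r \<tau>' \<le> r \<tau>" using finU \<open>r \<tau> = m\<close> m_def by simp
    define \<sigma> where "\<sigma> = p \<tau>"
    define K1 where "K1 = K - {\<sigma>, \<tau>}"
    define U1 where "U1 = U - {\<tau>}"
    have \<sigma>K: "\<sigma> \<in> K" and \<tau>\<sigma>: "\<tau> \<subset> \<sigma>" and card\<sigma>: "card \<sigma> = Suc (card \<tau>)" and \<sigma>U: "\<sigma> \<notin> U"
      using pU \<tau>U \<sigma>_def by auto
    have \<tau>K: "\<tau> \<in> K" using UK \<tau>U by auto
    have free: "\<forall>\<rho>\<in>K. \<tau> \<subseteq> \<rho> \<longrightarrow> \<rho> = \<tau> \<or> \<rho> = \<sigma>"
    proof (intro ballI impI)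
      fix \<rho> assume \<rho>K: "\<rho> \<in> K" and t\<rho>: "\<tau> \<subseteq> \<rho>"
      have "\<rho> \<in> U \<union> p`U" using up \<tau>U \<rho>K t\<rho> by blast
      show "\<rho> = \<tau> \<or> \<rho> = \<sigma>"
      proof (rule ccontr)
        assume ne: "\<not> (\<rho> = \<tau> \<or> \<rho> = \<sigma>)"
        then have sub: "\<tau> \<subset> \<rho>" using t\<rho> by auto
        show False
        proof (cases "\<rho> \<in> U")
          case True
          then have "r \<tau> < r \<rho>" using rk \<tau>U sub by blast
          then show False using \<tau>max True by (meson leD)
        next
          case False
          then obtain \<tau>' where \<tau>'U: "\<tau>' \<in> U" and "\<rho> = p \<tau>'" using \<open>\<rho> \<in> U \<union> p`U\<close> by auto
          then have "\<tau>' \<noteq> \<tau>" using ne \<sigma>_def by auto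
          then have "r \<tau> < r \<tau>'" using rk \<tau>U \<tau>'U sub \<open>\<rho> = p \<tau>'\<close> by blast
          then show False using \<tau>max \<tau>'U by (meson leD)
        qed
      qed
    qed
    have ec: "elementary_collapse K K1"
      unfolding elementary_collapse_def K1_def
      apply (rule conjI[OF sc]) apply (rule exI[of _ \<sigma>], rule exI[of _ \<tau>]) using \<sigma>K \<tau>K \<tau>\<sigma> card\<sigma> free by blast
    have sc1: "simplicial_complex K1"
    proof (rule sc_intro)
      show "finite K1" using finK K1_def by simp
      fix s assume sK1: "s \<in> K1"
      then have sK: "s \<in> K" using K1_def by simp
      show "finite s" "s \<noteq> {}" using sc_face[OF sc sK] by auto
    next
      fix s t assume sK1: "s \<in> K1" and t: "t \<noteq> {}" "t \<subseteq> s"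
      then have sK: "s \<in> K" using K1_def by simp
      have "t \<in> K" using sc_down[OF sc sK t] .
      moreover have "t \<noteq> \<tau>"
      proof
        assume "t = \<tau>"
        then have "s = \<tau> \<or> s = \<sigma>" using free sK t by auto
        then show False using sK1 K1_def by auto
      qed
      moreover have "t \<noteq> \<sigma>"
      proof
        assume "t = \<sigma>"
        then have "\<tau> \<subseteq> s" using t \<tau>\<sigma> by auto
        then have "s = \<tau> \<or> s = \<sigma>" using free sK by auto
        then show False using sK1 K1_def by auto
      qed
      ultimately show "t \<in> K1" using K1_def by simp
    qed
    have cardU1: "card U1 < card U" using finU \<tau>U U1_def by (metis card_Diff1_less)
    have pne: "\<And>t. t \<in> U1 \<Longrightarrow> p t \<noteq> \<sigma>"
      using inj \<tau>U U1_def \<sigma>_def by (auto dest: inj_onD)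
    have pne2: "\<And>t. t \<in> U1 \<Longrightarrow> p t \<noteq> \<tau>"
      using pU \<tau>U U1_def by auto
    have UK1: "U1 \<subseteq> K1" using UK U1_def K1_def \<sigma>U by auto
    have pU1: "\<forall>t\<in>U1. p t \<in> K1 \<and> t \<subset> p t \<and> card (p t) = Suc (card t) \<and> p t \<notin> U1"
      using pU pne pne2 K1_def U1_def by auto
    have inj1: "inj_on p U1" using inj U1_def by (auto intro: inj_on_subset)
    have eqR: "U \<union> p`U = (U1 \<union> p`U1) \<union> {\<tau>, \<sigma>}" using \<tau>U U1_def \<sigma>_def by auto
    have up1: "\<forall>\<rho>\<in>U1 \<union> p`U1. \<forall>\<rho>'\<in>K1. \<rho> \<subseteq> \<rho>' \<longrightarrow> \<rho>' \<in> U1 \<union> p`U1"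
    proof (intro ballI impI)
      fix \<rho> \<rho>' assume a: "\<rho> \<in> U1 \<union> p`U1" "\<rho>' \<in> K1" "\<rho> \<subseteq> \<rho>'"
      then have "\<rho> \<in> U \<union> p`U" using eqR by blast
      then have "\<rho>' \<in> U \<union> p`U" using up a K1_def by auto
      then show "\<rho>' \<in> U1 \<union> p`U1" using eqR a(2) K1_def by auto
    qed
    have rk1: "\<forall>\<tau>\<in>U1. \<forall>\<tau>'\<in>U1. \<tau> \<subset> \<tau>' \<or> (\<tau> \<subset> p \<tau>' \<and> \<tau> \<noteq> \<tau>') \<longrightarrow> r \<tau> < r \<tau>'"
      using rk U1_def by auto
    have "collapses K1 (K1 - (U1 \<union> p`U1))"
      using less.hyps[OF cardU1 sc1 UK1 pU1 inj1 up1 rk1] .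
    moreover have "K1 - (U1 \<union> p`U1) = K - (U \<union> p`U)" using eqR K1_def by auto
    ultimately have "collapses K1 (K - (U \<union> p`U))" by simp
    then show ?thesis using ec unfolding collapses_def
      by (rule converse_rtranclp_into_rtranclp[rotated])
  qed
qed

lemma sc_image:
  assumes sc: "simplicial_complex K"
  shows "simplicial_complex ((`) h ` K)"
proof (rule sc_intro)
  show "finite ((`) h ` K)" using sc_finite[OF sc] by simp
next
  fix s assume "s \<in> (`) h ` K"
  then obtain s0 where s0: "s0 \<in> K" "s = h ` s0" by auto
  then show "finite s" "s \<noteq> {}" using sc_face[OF sc s0(1)] by auto
next
  fix s t assume "s \<in> (`) h ` K" and t: "t \<noteq> {}" "t \<subseteq> s"
  then obtain s0 where s0: "s0 \<in> K" "s = h ` s0" by auto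
  define t0 where "t0 = s0 \<inter> h -` t"
  have "t = h ` t0" using t s0 t0_def by auto
  moreover have "t0 \<noteq> {}" using t s0 t0_def by auto
  moreover have "t0 \<in> K" using sc_down[OF sc s0(1) \<open>t0 \<noteq> {}\<close>] t0_def by auto
  ultimately show "t \<in> (`) h ` K" by auto
qed

lemma ec_image:
  assumes ec: "elementary_collapse K L" and inj: "inj_on h (\<Union>K)"
  shows "elementary_collapse ((`) h ` K) ((`) h ` L)"
proof -
  from ec obtain \<sigma> \<tau> where sc: "simplicial_complex K" and \<sigma>K: "\<sigma> \<in> K" and \<tau>K: "\<tau> \<in> K"
    and sub: "\<tau> \<subset> \<sigma>" and cd: "card \<sigma> = Suc (card \<tau>)"
    and free: "\<forall>\<rho>\<in>K. \<tau> \<subseteq> \<rho> \<longrightarrow> \<rho> = \<tau> \<or> \<rho> = \<sigma>" and L: "L = K - {\<sigma>, \<tau>}"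
    unfolding elementary_collapse_def by blast
  have inj\<sigma>: "inj_on h \<sigma>" using inj \<sigma>K by (auto intro: inj_on_subset)
  have inj\<tau>: "inj_on h \<tau>" using inj \<tau>K by (auto intro: inj_on_subset)
  have injI: "inj_on ((`) h) K" using inj by (rule inj_on_image)
  have cd2: "card (h ` \<sigma>) = Suc (card (h ` \<tau>))"
    using cd card_image[OF inj\<sigma>] card_image[OF inj\<tau>] by simp
  have "h ` \<tau> \<subset> h ` \<sigma>"
  proof (rule psubsetI)
    show "h ` \<tau> \<subseteq> h ` \<sigma>" using sub by (intro image_mono) auto
    show "h ` \<tau> \<noteq> h ` \<sigma>" using cd2 by auto
  qed
  moreover note cd2
  moreover have "\<forall>\<rho>\<in>(`) h ` K. h ` \<tau> \<subseteq> \<rho> \<longrightarrow> \<rho> = h ` \<tau> \<or> \<rho> = h ` \<sigma>"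
  proof (intro ballI impI)
    fix \<rho> assume "\<rho> \<in> (`) h ` K" and le: "h ` \<tau> \<subseteq> \<rho>"
    then obtain \<rho>0 where \<rho>0: "\<rho>0 \<in> K" "\<rho> = h ` \<rho>0" by auto
    have "inj_on h (\<tau> \<union> \<rho>0)" using inj \<rho>0 \<tau>K by (auto intro: inj_on_subset)
    note inj' = this
    have "\<tau> \<subseteq> \<rho>0"
    proof
      fix x assume x: "x \<in> \<tau>"
      then have "h x \<in> h ` \<rho>0" using le \<rho>0 by auto
      then obtain y where y: "y \<in> \<rho>0" "h x = h y" by auto
      then have "x = y" using inj_onD[OF inj' y(2)] x by auto
      then show "x \<in> \<rho>0" using y by simp
    qed
    then show "\<rho> = h ` \<tau> \<or> \<rho> = h ` \<sigma>" using free \<rho>0 by auto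
  qed
  moreover have "(`) h ` L = (`) h ` K - {h ` \<sigma>, h ` \<tau>}"
  proof -
    have "(`) h ` (K - {\<sigma>, \<tau>}) = (`) h ` K - (`) h ` {\<sigma>, \<tau>}"
      by (rule inj_on_image_set_diff[OF injI]) (use \<sigma>K \<tau>K in auto)
    then show ?thesis unfolding L by simp
  qed
  ultimately show ?thesis
    unfolding elementary_collapse_def
    apply (intro conjI[OF sc_image[OF sc]])
    apply (rule exI[of _ "h ` \<sigma>"], rule exI[of _ "h ` \<tau>"])
    using \<sigma>K \<tau>K by blast
qed

lemma collapses_image:
  assumes "collapses K L" and inj: "inj_on h (\<Union>K)"
  shows "collapses ((`) h ` K) ((`) h ` L)"
  using assms(1) unfolding collapses_def
proof (induction rule: rtranclp_induct)
  case base then show ?case by simp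
next
  case (step y z)
  have "y \<subseteq> K" using step.hyps(1) collapses_subset unfolding collapses_def by blast
  then have "inj_on h (\<Union>y)" using inj by (auto intro: inj_on_subset)
  then have e: "elementary_collapse ((`) h ` y) ((`) h ` z)" using ec_image step.hyps(2) by blast
  show ?case using step.IH e by (rule rtranclp.rtrancl_into_rtrancl)
qed

lemma chain_Union_in:
  assumes "finite c" "c \<noteq> {}" "\<forall>x\<in>c. \<forall>y\<in>c. x \<subseteq> y \<or> y \<subseteq> (x::'a set)"
  shows "\<Union>c \<in> c"
  using assms
proof (induction c rule: finite_ne_induct)
  case (singleton x) then show ?case by simp
next
  case (insert x F)
  then have "\<Union>F \<in> F" by blast
  then have "x \<subseteq> \<Union>F \<or> \<Union>F \<subseteq> x" using insert.prems by blast
  moreover have "\<Union>(insert x F) = x \<union> \<Union>F" by simp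
  ultimately show ?case using \<open>\<Union>F \<in> F\<close> by (metis Un_absorb1 Un_absorb2 insertCI)
qed

lemma chain_Inter_in:
  assumes "finite c" "c \<noteq> {}" "\<forall>x\<in>c. \<forall>y\<in>c. x \<subseteq> y \<or> y \<subseteq> (x::'a set)"
  shows "\<Inter>c \<in> c"
  using assms
proof (induction c rule: finite_ne_induct)
  case (singleton x) then show ?case by simp
next
  case (insert x F)
  then have "\<Inter>F \<in> F" by blast
  then have "x \<subseteq> \<Inter>F \<or> \<Inter>F \<subseteq> x" using insert.prems by blast
  moreover have "\<Inter>(insert x F) = x \<inter> \<Inter>F" by simp
  ultimately show ?case using \<open>\<Inter>F \<in> F\<close> by (metis Int_absorb1 Int_absorb2 insertCI)
qed

lemma oc_sc:
  assumes "finite P"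
  shows "simplicial_complex (order_complex P)"
proof (rule sc_intro)
  have "order_complex P \<subseteq> Pow P" unfolding order_complex_def by auto
  then show "finite (order_complex P)" using assms by (metis finite_Pow_iff finite_subset)
next
  fix s assume "s \<in> order_complex P"
  then show "finite s" "s \<noteq> {}" unfolding order_complex_def by auto
next
  fix s t assume "s \<in> order_complex P" "t \<noteq> {}" "t \<subseteq> s"
  then show "t \<in> order_complex P" unfolding order_complex_def
    by (simp add: finite_subset subset_iff)
qed

locale lov =
  fixes V :: "'a set" and E :: "'a \<Rightarrow> 'a \<Rightarrow> bool"
  assumes fg: "finite_graph V E"
begin

abbreviation "Nb \<equiv> common_nbhd V E"
abbreviation "K \<equiv> neighborhood_complex V E"

lemma finV: "finite V" and symE: "E u v \<Longrightarrow> E v u"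
  using fg unfolding finite_graph_def by auto

lemma Nb_sub: "Nb S \<subseteq> V" unfolding common_nbhd_def by auto

lemma Nb_anti: "A \<subseteq> B \<Longrightarrow> Nb B \<subseteq> Nb A" unfolding common_nbhd_def by auto

lemma NbNb: "S \<subseteq> V \<Longrightarrow> S \<subseteq> Nb (Nb S)"
  unfolding common_nbhd_def using symE by auto

lemma K_sub: "S \<in> K \<Longrightarrow> S \<subseteq> V \<and> S \<noteq> {} \<and> Nb S \<noteq> {}"
  unfolding neighborhood_complex_def by auto

lemma Nb_K: "S \<in> K \<Longrightarrow> Nb S \<in> K"
proof -
  assume S: "S \<in> K"
  then have "S \<subseteq> Nb (Nb S)" "S \<noteq> {}" using NbNb K_sub by auto
  then show ?thesis using S K_sub[OF S] Nb_sub unfolding neighborhood_complex_def by auto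
qed

lemma cl_le: "T \<in> K \<Longrightarrow> S \<subseteq> Nb T \<Longrightarrow> Nb (Nb S) \<subseteq> Nb T"
proof -
  assume T: "T \<in> K" and S: "S \<subseteq> Nb T"
  have "T \<subseteq> Nb S" using K_sub[OF T] S symE unfolding common_nbhd_def by auto
  then show ?thesis by (rule Nb_anti)
qed

lemma finK: "finite K"
proof -
  have "K \<subseteq> Pow V" unfolding neighborhood_complex_def by auto
  then show ?thesis using finV finite_subset by auto
qed

definition "Cl = Nb ` K"
definition "xc c = \<Union>{y\<in>c. y \<notin> Cl}"
definition "Bd = order_complex K"
definition "R = {c \<in> Bd. \<exists>y\<in>c. y \<notin> Cl}"
definition "U = {c \<in> R. Nb (Nb (xc c)) \<notin> c}"
definition "p c = insert (Nb (Nb (xc c))) c"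

lemma Cl_K: "Cl \<subseteq> K" unfolding Cl_def using Nb_K by auto

lemma xc_in: assumes "c \<in> R" shows "xc c \<in> c" "xc c \<notin> Cl" "xc c \<in> K"
proof -
  have c: "finite c" "c \<subseteq> K" "\<forall>x\<in>c. \<forall>y\<in>c. x \<subseteq> y \<or> y \<subseteq> x"
    using assms unfolding R_def Bd_def order_complex_def by auto
  have "\<Union>{y\<in>c. y \<notin> Cl} \<in> {y\<in>c. y \<notin> Cl}"
    by (rule chain_Union_in) (use c assms in \<open>auto simp: R_def\<close>)
  then show "xc c \<in> c" "xc c \<notin> Cl" using xc_def by auto
  then show "xc c \<in> K" using c by auto
qed

lemma xc_ins: "z \<in> Cl \<Longrightarrow> xc (insert z c) = xc c" unfolding xc_def by auto
lemma xc_del: "z \<in> Cl \<Longrightarrow> xc (c - {z}) = xc c" unfolding xc_def by auto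
lemma xc_mono: "c \<subseteq> c' \<Longrightarrow> xc c \<subseteq> xc c'" unfolding xc_def by auto

lemma cl_in: "S \<in> K \<Longrightarrow> Nb (Nb S) \<in> Cl \<and> Nb (Nb S) \<in> K"
  using Nb_K Cl_def by auto

lemma p_Bd: assumes c: "c \<in> R" shows "p c \<in> Bd"
proof -
  have cB: "finite c" "c \<subseteq> K" "\<forall>x\<in>c. \<forall>y\<in>c. x \<subseteq> y \<or> y \<subseteq> x" "c \<noteq> {}"
    using c unfolding R_def Bd_def order_complex_def by auto
  define x where "x = xc c"
  have x: "x \<in> c" "x \<in> K" using xc_in[OF c] x_def by auto
  have xcl: "x \<subseteq> Nb (Nb x)" using NbNb K_sub[OF x(2)] by auto
  have clK: "Nb (Nb x) \<in> K" using cl_in x by auto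
  have comp: "y \<subseteq> Nb (Nb x) \<or> Nb (Nb x) \<subseteq> y" if y: "y \<in> c" for y
  proof (cases "y \<in> Cl")
    case False
    then have "y \<subseteq> x" using y x_def xc_def by auto
    then show ?thesis using xcl by auto
  next
    case True
    then obtain T where T: "T \<in> K" "y = Nb T" using Cl_def by auto
    have "y \<subseteq> x \<or> x \<subseteq> y" using cB(3) y x by auto
    then show ?thesis using xcl cl_le[OF T(1)] T(2) by auto
  qed
  show ?thesis unfolding p_def Bd_def order_complex_def
    using cB clK comp x_def by auto
qed

lemma R_eq: "U \<union> p ` U = R"
proof
  show "U \<union> p ` U \<subseteq> R"
  proof
    fix c assume "c \<in> U \<union> p ` U"
    then show "c \<in> R"
    proof
      assume "c \<in> U" then show ?thesis using U_def by auto
    next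
      assume "c \<in> p ` U"
      then obtain c0 where c0: "c0 \<in> U" "c = p c0" by auto
      then have "c0 \<in> R" using U_def by auto
      then show ?thesis using p_Bd c0 unfolding R_def p_def by auto
    qed
  qed
next
  show "R \<subseteq> U \<union> p ` U"
  proof
    fix c assume cR: "c \<in> R"
    show "c \<in> U \<union> p ` U"
    proof (cases "Nb (Nb (xc c)) \<in> c")
      case False then show ?thesis using cR U_def by auto
    next
      case True
      define z where "z = Nb (Nb (xc c))"
      have zCl: "z \<in> Cl" using cl_in xc_in[OF cR] z_def by auto
      have xne: "xc c \<noteq> z" using zCl xc_in[OF cR] by auto
      define c0 where "c0 = c - {z}"
      have "xc c \<in> c0" using xc_in[OF cR] xne c0_def by auto
      moreover have "c0 \<subseteq> c" using c0_def by auto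
      ultimately have "c0 \<in> Bd" using cR sc_down[OF oc_sc[OF finK]] unfolding R_def Bd_def
        by blast
      then have "c0 \<in> R" using \<open>xc c \<in> c0\<close> xc_in[OF cR] R_def by auto
      moreover have "xc c0 = xc c" using xc_del zCl c0_def by auto
      ultimately have "c0 \<in> U" using U_def c0_def z_def by auto
      moreover have "p c0 = c" using \<open>xc c0 = xc c\<close> True p_def c0_def z_def by auto
      ultimately show ?thesis by auto
    qed
  qed
qed

lemma Bd_minus_R: "Bd - R = lovasz_complex V E"
  unfolding lovasz_complex_def face_poset_def Bd_def R_def
  using Cl_K unfolding Cl_def[symmetric] order_complex_def by auto

theorem lovasz_collapse: "collapses (barycentric_subdivision K) (lovasz_complex V E)"
proof -
  have sc: "simplicial_complex Bd" unfolding Bd_def using finK by (rule oc_sc)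
  have UB: "U \<subseteq> Bd" using U_def R_def by auto
  have pU: "\<forall>\<tau>\<in>U. p \<tau> \<in> Bd \<and> \<tau> \<subset> p \<tau> \<and> card (p \<tau>) = Suc (card \<tau>) \<and> p \<tau> \<notin> U"
  proof
    fix t assume t: "t \<in> U"
    then have tR: "t \<in> R" and nin: "Nb (Nb (xc t)) \<notin> t" using U_def by auto
    have ft: "finite t" using tR unfolding R_def Bd_def order_complex_def by auto
    have "xc (p t) = xc t" using xc_ins cl_in xc_in[OF tR] p_def by auto
    then have "p t \<notin> U" using U_def p_def by auto
    then show "p t \<in> Bd \<and> t \<subset> p t \<and> card (p t) = Suc (card t) \<and> p t \<notin> U"
      using p_Bd[OF tR] nin ft p_def by auto
  qed
  have inj: "inj_on p U"
  proof (rule inj_onI)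
    fix a b assume a: "a \<in> U" and b: "b \<in> U" and eq: "p a = p b"
    have xa: "xc (p a) = xc a" using xc_ins cl_in xc_in a U_def p_def by auto
    have xb: "xc (p b) = xc b" using xc_ins cl_in xc_in b U_def p_def by auto
    have "xc a = xc b" using xa xb eq by simp
    have na: "Nb (Nb (xc a)) \<notin> a" using a U_def by auto
    have nb: "Nb (Nb (xc b)) \<notin> b" using b U_def by auto
    have "a = p a - {Nb (Nb (xc a))}" using na p_def by auto
    also have "\<dots> = p b - {Nb (Nb (xc b))}" using eq \<open>xc a = xc b\<close> by simp
    also have "\<dots> = b" using nb p_def by auto
    finally show "a = b" .
  qed
  have up: "\<forall>\<rho>\<in>U \<union> p`U. \<forall>\<rho>'\<in>Bd. \<rho> \<subseteq> \<rho>' \<longrightarrow> \<rho>' \<in> U \<union> p`U"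
    unfolding R_eq unfolding R_def by blast
  define r where "r c = (card (xc c), card c)" for c
  have rk: "\<forall>\<tau>\<in>U. \<forall>\<tau>'\<in>U. \<tau> \<subset> \<tau>' \<or> (\<tau> \<subset> p \<tau>' \<and> \<tau> \<noteq> \<tau>') \<longrightarrow> r \<tau> < r \<tau>'"
  proof (intro ballI impI)
    fix a b assume a: "a \<in> U" and b: "b \<in> U" and h: "a \<subset> b \<or> (a \<subset> p b \<and> a \<noteq> b)"
    have bR: "b \<in> R" using b U_def by auto
    have xb: "xc (p b) = xc b" using xc_ins cl_in xc_in bR p_def by auto
    have "a \<subseteq> p b" using h p_def by auto
    then have sub: "xc a \<subseteq> xc b" using xc_mono xb by metis
    have fb: "finite (xc b)" using xc_in[OF bR] K_sub finV finite_subset by metis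
    have fb2: "finite b" using bR unfolding R_def Bd_def order_complex_def by auto
    show "r a < r b"
    proof (cases "xc a = xc b")
      case False
      then have "card (xc a) < card (xc b)" using sub fb by (simp add: psubset_card_mono)
      then show ?thesis unfolding r_def by simp
    next
      case True
      have "a \<subset> b"
      proof (cases "a \<subset> b")
        case False
        then have "a \<subseteq> insert (Nb (Nb (xc b))) b" "a \<noteq> b" using h p_def by auto
        moreover have "Nb (Nb (xc b)) \<notin> a" using a U_def True by auto
        ultimately show ?thesis by auto
      qed simp
      then have "card a < card b" using fb2 by (simp add: psubset_card_mono)
      then show ?thesis unfolding r_def using True by simp
    qed
  qed
  have c1: "collapses Bd (Bd - (U \<union> p`U))"
    by (rule matching_collapse[OF sc UB pU inj up rk])
  have e1: "Bd - (U \<union> p`U) = lovasz_complex V E" using R_eq Bd_minus_R by (simp only:)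
  have e2: "barycentric_subdivision K = Bd"
    by (simp only: barycentric_subdivision_def face_poset_def Bd_def)
  show ?thesis using c1 by (simp only: e1 e2)
qed

end

definition Mc :: "'a set set \<Rightarrow> ('a + 'a set) set set" where
  "Mc K = {X. (Inr -` X = {} \<and> Inl -` X \<in> K) \<or>
              (Inr -` X \<in> order_complex K \<and> Inl -` X \<subseteq> \<Inter>(Inr -` X))}"

lemma Mc_iff: "X \<in> Mc K \<longleftrightarrow> ((Inr -` X = {} \<and> Inl -` X \<in> K) \<or>
              (Inr -` X \<in> order_complex K \<and> Inl -` X \<subseteq> \<Inter>(Inr -` X)))"
  by (simp only: Mc_def mem_Collect_eq)

lemma sum_split: "X = Inl ` (Inl -` X) \<union> Inr ` (Inr -` X)"
proof (rule set_eqI)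
  fix x show "x \<in> X \<longleftrightarrow> x \<in> Inl ` (Inl -` X) \<union> Inr ` (Inr -` X)"
    by (cases x) auto
qed

lemma vim_simps:
  "Inl -` insert (Inr s) X = Inl -` X" "Inr -` insert (Inr s) X = insert s (Inr -` X)"
  "Inr -` insert (Inl v) X = Inr -` X" "Inl -` insert (Inl v) X = insert v (Inl -` X)"
  "Inl -` (X - {Inr s}) = Inl -` X" "Inr -` (X - {Inr s}) = Inr -` X - {s}"
  "Inr -` (X - {Inl v}) = Inr -` X" "Inl -` (X - {Inl v}) = Inl -` X - {v}"
  by auto

lemma vim_Inl: "Inl -` (Inl ` A) = A" "Inr -` (Inl ` A) = {}"
  and vim_Inr: "Inr -` (Inr ` A) = A" "Inl -` (Inr ` A) = {}"
  by auto

lemma sc_Union_finite: "simplicial_complex K \<Longrightarrow> finite (\<Union>K)"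
  using sc_finite sc_face by blast

lemma Mc_C2: assumes "X \<in> Mc K" "Inr -` X \<noteq> {}"
  shows "Inr -` X \<in> order_complex K" "Inl -` X \<subseteq> \<Inter>(Inr -` X)"
proof -
  have d: "(Inr -` X = {} \<and> Inl -` X \<in> K) \<or>
              (Inr -` X \<in> order_complex K \<and> Inl -` X \<subseteq> \<Inter>(Inr -` X))"
    using assms(1) by (simp only: Mc_iff)
  show "Inr -` X \<in> order_complex K" "Inl -` X \<subseteq> \<Inter>(Inr -` X)"
    using d assms(2) by (metis (no_types))+
qed

lemma ex_self: "a \<in> K \<Longrightarrow> \<exists>s\<in>K. a \<subseteq> s" by blast

lemma Mc_C1: assumes "X \<in> Mc K" "Inr -` X = {}"
  shows "Inl -` X \<in> K"
proof -
  have d: "(Inr -` X = {} \<and> Inl -` X \<in> K) \<or>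
              (Inr -` X \<in> order_complex K \<and> Inl -` X \<subseteq> \<Inter>(Inr -` X))"
    using assms(1) by (simp only: Mc_iff)
  have "{} \<notin> order_complex K" unfolding order_complex_def by simp
  then show ?thesis using d assms(2) by (metis (no_types))
qed

locale cplx =
  fixes K :: "'a set set"
  assumes sc: "simplicial_complex K"
begin

lemma oc_sc': "simplicial_complex (order_complex K)"
  using oc_sc sc_finite[OF sc] by blast

lemma oc_mem: "C \<in> order_complex K \<Longrightarrow> finite C \<and> C \<noteq> {} \<and> C \<subseteq> K \<and> (\<forall>x\<in>C. \<forall>y\<in>C. x \<subseteq> y \<or> y \<subseteq> x)"
  unfolding order_complex_def mem_Collect_eq by (elim conjE) (intro conjI)

lemma oc_Inter_face: "C \<in> order_complex K \<Longrightarrow> A \<subseteq> \<Inter>C \<Longrightarrow> \<exists>s\<in>K. A \<subseteq> s"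
proof -
  assume C: "C \<in> order_complex K" and A: "A \<subseteq> \<Inter>C"
  have "C \<noteq> {}" "C \<subseteq> K" using oc_mem[OF C] by simp_all
  then obtain c where c: "c \<in> C" "c \<in> K" by blast
  then have "A \<subseteq> c" using A by blast
  then show ?thesis using c by blast
qed

lemma Mc_A_finite:
  assumes "X \<in> Mc K" shows "finite (Inl -` X)" "Inl -` X \<subseteq> \<Union>K"
proof -
  have "\<exists>s\<in>K. Inl -` X \<subseteq> s"
  proof (cases "Inr -` X = {}")
    case True show ?thesis by (rule ex_self[OF Mc_C1[OF assms True]])
  next
    case False
    note C = Mc_C2[OF assms False]
    from C show ?thesis by (rule oc_Inter_face)
  qed
  then obtain s where "s \<in> K" "Inl -` X \<subseteq> s" by blast
  then show "finite (Inl -` X)" "Inl -` X \<subseteq> \<Union>K" using sc_face[OF sc] finite_subset by blast+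
qed

lemma Mc_C: "X \<in> Mc K \<Longrightarrow> finite (Inr -` X) \<and> Inr -` X \<subseteq> K"
proof -
  assume X: "X \<in> Mc K"
  show ?thesis
  proof (cases "Inr -` X = {}")
    case True then show ?thesis by simp
  next
    case False then show ?thesis using Mc_C2[OF X False] oc_mem by blast
  qed
qed

lemma Mc_finite_face: "X \<in> Mc K \<Longrightarrow> finite X"
  using Mc_A_finite Mc_C sum_split[of X] by (metis finite_Un finite_imageI)

lemma Mc_ne: "X \<in> Mc K \<Longrightarrow> X \<noteq> {}"
proof
  assume "X \<in> Mc K" "X = {}"
  then have "{} \<in> K \<or> {} \<in> order_complex K" using Mc_iff[of X] by simp
  moreover have "{} \<notin> K" using sc_face[OF sc, of "{}"] by blast
  moreover have "{} \<notin> order_complex K" unfolding order_complex_def by simp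
  ultimately show False by blast
qed

lemma Mc_sc: "simplicial_complex (Mc K)"
proof (rule sc_intro)
  have "Mc K \<subseteq> Pow (Inl ` \<Union>K \<union> Inr ` K)"
  proof
    fix X assume X: "X \<in> Mc K"
    have "X = Inl ` (Inl -` X) \<union> Inr ` (Inr -` X)" by (rule sum_split)
    also have "\<dots> \<subseteq> Inl ` \<Union>K \<union> Inr ` K"
      by (intro Un_mono image_mono) (use Mc_A_finite[OF X] Mc_C[OF X] in simp_all)
    finally show "X \<in> Pow (Inl ` \<Union>K \<union> Inr ` K)" by simp
  qed
  moreover have "finite (Pow (Inl ` \<Union>K \<union> Inr ` K))"
    using sc_Union_finite[OF sc] sc_finite[OF sc] by simp
  ultimately show "finite (Mc K)" by (rule finite_subset)
next
  fix s assume "s \<in> Mc K" then show "finite s" "s \<noteq> {}" using Mc_finite_face Mc_ne by auto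
next
  fix X Y assume X: "X \<in> Mc K" and Y: "Y \<noteq> {}" "Y \<subseteq> X"
  have AY: "Inl -` Y \<subseteq> Inl -` X" and CY: "Inr -` Y \<subseteq> Inr -` X" using Y by auto
  show "Y \<in> Mc K"
  proof (cases "Inr -` Y = {}")
    case True
    have ne: "Inl -` Y \<noteq> {}"
    proof
      assume e: "Inl -` Y = {}"
      have "Y = Inl ` (Inl -` Y) \<union> Inr ` (Inr -` Y)" by (rule sum_split)
      also have "\<dots> = {}" unfolding e True by simp
      finally show False using Y(1) by simp
    qed
    have "\<exists>s\<in>K. Inl -` X \<subseteq> s"
    proof (cases "Inr -` X = {}")
      case True show ?thesis by (rule ex_self[OF Mc_C1[OF X True]])
    next
      case False
      note C = Mc_C2[OF X False]
      from C show ?thesis by (rule oc_Inter_face)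
    qed
    then obtain s where s: "s \<in> K" "Inl -` X \<subseteq> s" by blast
    have "Inl -` Y \<in> K" using sc_down[OF sc s(1) ne] AY s(2) by blast
    then show ?thesis using Mc_iff True by blast
  next
    case False
    then have "Inr -` X \<noteq> {}" using CY by auto
    note C = Mc_C2[OF X \<open>Inr -` X \<noteq> {}\<close>]
    have "Inr -` Y \<in> order_complex K" using sc_down[OF oc_sc' C(1) False CY] .
    moreover have "Inl -` Y \<subseteq> \<Inter>(Inr -` Y)" using AY C(2) CY by blast
    ultimately show ?thesis using Mc_iff by blast
  qed
qed

end

context cplx
begin

lemma oc_insert:
  assumes A: "A \<in> K" and C: "C = {} \<or> (C \<in> order_complex K \<and> A \<subseteq> \<Inter>C)"
  shows "insert A C \<in> order_complex K"
proof (cases "C = {}")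
  case True
  then show ?thesis using A unfolding order_complex_def by simp
next
  case False
  then have C1: "C \<in> order_complex K" and AC: "A \<subseteq> \<Inter>C" using C by auto
  note m = oc_mem[OF C1]
  have fin: "finite (insert A C)" using m by simp
  have sub: "insert A C \<subseteq> K" using m A by simp
  have ch: "\<forall>x\<in>insert A C. \<forall>y\<in>insert A C. x \<subseteq> y \<or> y \<subseteq> x"
  proof (intro ballI)
    fix x y assume x: "x \<in> insert A C" and y: "y \<in> insert A C"
    have Ac: "\<And>c. c \<in> C \<Longrightarrow> A \<subseteq> c" using AC by blast
    show "x \<subseteq> y \<or> y \<subseteq> x"
      using x y m Ac by (cases "x = A"; cases "y = A") auto
  qed
  show ?thesis unfolding order_complex_def using fin sub ch by simp
qed

definition "Ua = {X \<in> Mc K. Inl -` X \<noteq> {} \<and> Inr (Inl -` X) \<notin> X}"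
definition "pa X = insert (Inr (Inl -` X)) X"
definition "Ra = {X \<in> Mc K. Inl -` X \<noteq> {}}"

lemma A_in_K:
  assumes X: "X \<in> Mc K" and ne: "Inl -` X \<noteq> {}"
  shows "Inl -` X \<in> K"
proof (cases "Inr -` X = {}")
  case True then show ?thesis using Mc_C1[OF X] by blast
next
  case False
  note C = Mc_C2[OF X False]
  obtain s where "s \<in> K" "Inl -` X \<subseteq> s" using oc_Inter_face[OF C] by blast
  then show ?thesis using sc_down[OF sc _ ne] by blast
qed

lemma pa_Mc:
  assumes X: "X \<in> Mc K" and ne: "Inl -` X \<noteq> {}"
  shows "pa X \<in> Mc K"
proof -
  define A where "A = Inl -` X"
  define C where "C = Inr -` X"
  have AK: "A \<in> K" using A_in_K[OF X ne] A_def by simp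
  have CC: "C = {} \<or> (C \<in> order_complex K \<and> A \<subseteq> \<Inter>C)"
    using Mc_C2[OF X] A_def C_def by blast
  have i: "insert A C \<in> order_complex K" by (rule oc_insert[OF AK CC])
  have j: "A \<subseteq> \<Inter>(insert A C)" using CC by auto
  have e1: "Inl -` pa X = A" unfolding pa_def A_def by (simp only: vim_simps)
  have e2: "Inr -` pa X = insert A C" unfolding pa_def A_def C_def by (simp only: vim_simps)
  show ?thesis unfolding Mc_iff e1 e2 using i j by blast
qed

lemma Mc_minus_Ra: "Mc K - Ra = (`) Inr ` order_complex K"
proof
  show "Mc K - Ra \<subseteq> (`) Inr ` order_complex K"
  proof
    fix X assume "X \<in> Mc K - Ra"
    then have X: "X \<in> Mc K" and e: "Inl -` X = {}" unfolding Ra_def by auto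
    have "Inr -` X \<noteq> {}"
    proof
      assume "Inr -` X = {}"
      then have "{} \<in> K" using Mc_C1[OF X] e by simp
      then show False using sc_face[OF sc, of "{}"] by simp
    qed
    note C = Mc_C2[OF X this]
    have "X = Inl ` (Inl -` X) \<union> Inr ` (Inr -` X)" by (rule sum_split)
    also have "\<dots> = Inr ` (Inr -` X)" unfolding e by simp
    finally show "X \<in> (`) Inr ` order_complex K" using C(1) by blast
  qed
next
  show "(`) Inr ` order_complex K \<subseteq> Mc K - Ra"
  proof
    fix X :: "('a + 'a set) set" assume "X \<in> (`) Inr ` order_complex K"
    then obtain c where c: "c \<in> order_complex K" "X = Inr ` c" by blast
    have e1: "Inl -` X = {}" "Inr -` X = c" using c(2) vim_Inr by simp_all
    have "X \<in> Mc K" unfolding Mc_iff e1 using c(1) by simp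
    then show "X \<in> Mc K - Ra" unfolding Ra_def using e1 by simp
  qed
qed

lemma collapse_a: "collapses (Mc K) ((`) Inr ` order_complex K)"
proof -
  have UB: "Ua \<subseteq> Mc K" unfolding Ua_def by blast
  have pU: "\<forall>\<tau>\<in>Ua. pa \<tau> \<in> Mc K \<and> \<tau> \<subset> pa \<tau> \<and> card (pa \<tau>) = Suc (card \<tau>) \<and> pa \<tau> \<notin> Ua"
  proof
    fix t assume "t \<in> Ua"
    then have t: "t \<in> Mc K" "Inl -` t \<noteq> {}" "Inr (Inl -` t) \<notin> t" unfolding Ua_def by auto
    have e1: "Inl -` pa t = Inl -` t" unfolding pa_def by (simp only: vim_simps)
    have "Inr (Inl -` t) \<in> pa t" unfolding pa_def by simp
    then have "pa t \<notin> Ua" unfolding Ua_def using e1 by simp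
    moreover have "finite t" using Mc_finite_face[OF t(1)] .
    ultimately show "pa t \<in> Mc K \<and> t \<subset> pa t \<and> card (pa t) = Suc (card t) \<and> pa t \<notin> Ua"
      using pa_Mc[OF t(1,2)] t(3) unfolding pa_def by auto
  qed
  have inj: "inj_on pa Ua"
  proof (rule inj_onI)
    fix a b assume a: "a \<in> Ua" and b: "b \<in> Ua" and eq: "pa a = pa b"
    have ea: "Inl -` pa a = Inl -` a" unfolding pa_def by (simp only: vim_simps)
    have eb: "Inl -` pa b = Inl -` b" unfolding pa_def by (simp only: vim_simps)
    have Aeq: "Inl -` a = Inl -` b" using ea eb eq by simp
    have na: "Inr (Inl -` a) \<notin> a" using a unfolding Ua_def by blast
    have nb: "Inr (Inl -` b) \<notin> b" using b unfolding Ua_def by blast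
    have "a = pa a - {Inr (Inl -` a)}" using na unfolding pa_def by simp
    also have "\<dots> = pa b - {Inr (Inl -` b)}" using eq Aeq by simp
    also have "\<dots> = b" using nb unfolding pa_def by simp
    finally show "a = b" .
  qed
  have Req: "Ua \<union> pa ` Ua = Ra"
  proof
    show "Ua \<union> pa ` Ua \<subseteq> Ra"
    proof
      fix X assume "X \<in> Ua \<union> pa ` Ua"
      then show "X \<in> Ra"
      proof
        assume "X \<in> Ua" then show ?thesis unfolding Ua_def Ra_def by blast
      next
        assume "X \<in> pa ` Ua"
        then obtain t where t: "t \<in> Ua" "X = pa t" by blast
        then have t': "t \<in> Mc K" "Inl -` t \<noteq> {}" unfolding Ua_def by auto
        have e1: "Inl -` pa t = Inl -` t" unfolding pa_def by (simp only: vim_simps)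
        show ?thesis unfolding Ra_def t(2) using pa_Mc[OF t'] t'(2) e1 by simp
      qed
    qed
  next
    show "Ra \<subseteq> Ua \<union> pa ` Ua"
    proof
      fix X assume "X \<in> Ra"
      then have X: "X \<in> Mc K" and ne: "Inl -` X \<noteq> {}" unfolding Ra_def by auto
      define A where "A = Inl -` X"
      define C where "C = Inr -` X"
      show "X \<in> Ua \<union> pa ` Ua"
      proof (cases "Inr A \<in> X")
        case False then show ?thesis unfolding Ua_def using X ne A_def by blast
      next
        case True
        then have AC: "A \<in> C" unfolding C_def by simp
        define X0 where "X0 = X - {Inr A}"
        have e1: "Inl -` X0 = A" unfolding X0_def A_def by (simp only: vim_simps)
        have e2: "Inr -` X0 = C - {A}" unfolding X0_def C_def by (simp only: vim_simps)
        have CK: "C \<subseteq> K" using Mc_C[OF X] C_def by simp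
        have CnE: "Inr -` X \<noteq> {}" using AC C_def by blast
        note CC = Mc_C2[OF X CnE]
        have "X0 \<in> Mc K"
        proof (cases "C - {A} = {}")
          case True
          then show ?thesis unfolding Mc_iff e1 e2 using AC CK by blast
        next
          case False
          have "C - {A} \<in> order_complex K"
            using sc_down[OF oc_sc' CC(1) False] C_def by blast
          moreover have "A \<subseteq> \<Inter>(C - {A})" using CC(2) A_def C_def by blast
          ultimately show ?thesis unfolding Mc_iff e1 e2 by blast
        qed
        moreover have "Inr A \<notin> X0" unfolding X0_def by simp
        ultimately have "X0 \<in> Ua" unfolding Ua_def using e1 ne A_def by simp
        moreover have "pa X0 = X" unfolding pa_def e1 using True X0_def by auto
        ultimately show ?thesis by blast
      qed
    qed
  qed
  have up: "\<forall>\<rho>\<in>Ua \<union> pa ` Ua. \<forall>\<rho>'\<in>Mc K. \<rho> \<subseteq> \<rho>' \<longrightarrow> \<rho>' \<in> Ua \<union> pa ` Ua"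
    unfolding Req
  proof (intro ballI impI)
    fix r r' assume "r \<in> Ra" "r' \<in> Mc K" "r \<subseteq> r'"
    then show "r' \<in> Ra" unfolding Ra_def by blast
  qed
  define rk where "rk X = (card (Inl -` X), card X)" for X :: "('a + 'a set) set"
  have rkh: "\<forall>\<tau>\<in>Ua. \<forall>\<tau>'\<in>Ua. \<tau> \<subset> \<tau>' \<or> (\<tau> \<subset> pa \<tau>' \<and> \<tau> \<noteq> \<tau>') \<longrightarrow> rk \<tau> < rk \<tau>'"
  proof (intro ballI impI)
    fix a b assume a: "a \<in> Ua" and b: "b \<in> Ua" and h: "a \<subset> b \<or> (a \<subset> pa b \<and> a \<noteq> b)"
    have bM: "b \<in> Mc K" using b unfolding Ua_def by blast
    have eb: "Inl -` pa b = Inl -` b" unfolding pa_def by (simp only: vim_simps)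
    have "a \<subseteq> pa b" using h unfolding pa_def by blast
    then have "Inl -` a \<subseteq> Inl -` pa b" by blast
    then have sub: "Inl -` a \<subseteq> Inl -` b" using eb by simp
    have fb: "finite (Inl -` b)" using Mc_A_finite[OF bM] by simp
    have fb2: "finite b" using Mc_finite_face[OF bM] .
    show "rk a < rk b"
    proof (cases "Inl -` a = Inl -` b")
      case False
      then have "card (Inl -` a) < card (Inl -` b)" using sub fb by (simp add: psubset_card_mono)
      then show ?thesis unfolding rk_def by simp
    next
      case True
      have "a \<subset> b"
      proof (cases "a \<subset> b")
        case False
        then have "a \<subseteq> insert (Inr (Inl -` b)) b" "a \<noteq> b" using h unfolding pa_def by auto
        moreover have "Inr (Inl -` b) \<notin> a" using a True unfolding Ua_def by simp
        ultimately show ?thesis by blast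
      qed simp
      then have "card a < card b" using fb2 by (simp add: psubset_card_mono)
      then show ?thesis unfolding rk_def using True by simp
    qed
  qed
  have "collapses (Mc K) (Mc K - (Ua \<union> pa ` Ua))"
    by (rule matching_collapse[OF Mc_sc UB pU inj up rkh])
  then show ?thesis unfolding Req Mc_minus_Ra .
qed

end

context cplx
begin

definition "wv s = (SOME v. v \<in> s)"

lemma oc_Inter_ne: assumes "C \<in> order_complex K" shows "wv (\<Inter>C) \<in> \<Inter>C"
proof -
  note m = oc_mem[OF assms]
  have "\<Inter>C \<in> C" using chain_Inter_in m by blast
  then have "\<Inter>C \<in> K" using m by blast
  then have "\<Inter>C \<noteq> {}" using sc_face[OF sc] by blast
  then obtain v where "v \<in> \<Inter>C" by blast
  then show ?thesis unfolding wv_def by (rule someI)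
qed

definition ww :: "('a + 'a set) set \<Rightarrow> 'a + 'a set" where "ww X = Inl (wv (\<Inter>(Inr -` X)))"
definition "Ub = {X \<in> Mc K. Inr -` X \<noteq> {} \<and> ww X \<notin> X}"
definition "pb X = insert (ww X) X"
definition "Rb = {X \<in> Mc K. Inr -` X \<noteq> {}}"

lemma ww_ins: "Inr -` insert (ww X) Y = Inr -` Y" unfolding ww_def by (simp only: vim_simps)
lemma ww_del: "Inr -` (Y - {ww X}) = Inr -` Y" unfolding ww_def by (simp only: vim_simps)
lemma ww_eq: "Inr -` X = Inr -` Y \<Longrightarrow> ww X = ww Y" unfolding ww_def by simp

lemma pb_Mc:
  assumes X: "X \<in> Mc K" and ne: "Inr -` X \<noteq> {}"
  shows "pb X \<in> Mc K"
proof -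
  note C = Mc_C2[OF X ne]
  have w: "wv (\<Inter>(Inr -` X)) \<in> \<Inter>(Inr -` X)" by (rule oc_Inter_ne[OF C(1)])
  have e1: "Inr -` pb X = Inr -` X" unfolding pb_def by (rule ww_ins)
  have e2: "Inl -` pb X = insert (wv (\<Inter>(Inr -` X))) (Inl -` X)"
    unfolding pb_def ww_def by (simp only: vim_simps)
  have "insert (wv (\<Inter>(Inr -` X))) (Inl -` X) \<subseteq> \<Inter>(Inr -` X)" using w C(2) by blast
  then show ?thesis unfolding Mc_iff e1 e2 using C(1) by blast
qed

lemma Mc_minus_Rb: "Mc K - Rb = (`) Inl ` K"
proof
  show "Mc K - Rb \<subseteq> (`) Inl ` K"
  proof
    fix X assume "X \<in> Mc K - Rb"
    then have X: "X \<in> Mc K" and e: "Inr -` X = {}" unfolding Rb_def by auto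
    have A: "Inl -` X \<in> K" using Mc_C1[OF X e] .
    have "X = Inl ` (Inl -` X) \<union> Inr ` (Inr -` X)" by (rule sum_split)
    also have "\<dots> = Inl ` (Inl -` X)" unfolding e by simp
    finally show "X \<in> (`) Inl ` K" using A by blast
  qed
next
  show "(`) Inl ` K \<subseteq> Mc K - Rb"
  proof
    fix X :: "('a + 'a set) set" assume "X \<in> (`) Inl ` K"
    then obtain c where c: "c \<in> K" "X = Inl ` c" by blast
    have e1: "Inl -` X = c" "Inr -` X = {}" using c(2) vim_Inl by simp_all
    have "X \<in> Mc K" unfolding Mc_iff e1 using c(1) by simp
    then show "X \<in> Mc K - Rb" unfolding Rb_def using e1 by simp
  qed
qed

lemma collapse_b: "collapses (Mc K) ((`) Inl ` K)"
proof -
  have UB: "Ub \<subseteq> Mc K" unfolding Ub_def by blast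
  have pU: "\<forall>\<tau>\<in>Ub. pb \<tau> \<in> Mc K \<and> \<tau> \<subset> pb \<tau> \<and> card (pb \<tau>) = Suc (card \<tau>) \<and> pb \<tau> \<notin> Ub"
  proof
    fix t assume "t \<in> Ub"
    then have t: "t \<in> Mc K" "Inr -` t \<noteq> {}" "ww t \<notin> t" unfolding Ub_def by auto
    have e1: "Inr -` pb t = Inr -` t" unfolding pb_def by (rule ww_ins)
    have w1: "ww (pb t) = ww t" using ww_eq[OF e1] .
    have w2: "ww t \<in> pb t" unfolding pb_def by simp
    have "pb t \<notin> Ub"
    proof
      assume "pb t \<in> Ub" then have "ww (pb t) \<notin> pb t" unfolding Ub_def by blast
      then show False using w1 w2 by simp
    qed
    moreover have "finite t" using Mc_finite_face[OF t(1)] .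
    ultimately show "pb t \<in> Mc K \<and> t \<subset> pb t \<and> card (pb t) = Suc (card t) \<and> pb t \<notin> Ub"
      using pb_Mc[OF t(1,2)] t(3) unfolding pb_def by auto
  qed
  have inj: "inj_on pb Ub"
  proof (rule inj_onI)
    fix a b assume a: "a \<in> Ub" and b: "b \<in> Ub" and eq: "pb a = pb b"
    have ea: "Inr -` pb a = Inr -` a" unfolding pb_def by (rule ww_ins)
    have eb: "Inr -` pb b = Inr -` b" unfolding pb_def by (rule ww_ins)
    have weq: "ww a = ww b" using ea eb eq ww_eq by metis
    have na: "ww a \<notin> a" using a unfolding Ub_def by blast
    have nb: "ww b \<notin> b" using b unfolding Ub_def by blast
    have "a = pb a - {ww a}" using na unfolding pb_def by simp
    also have "\<dots> = pb b - {ww b}" using eq weq by simp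
    also have "\<dots> = b" using nb unfolding pb_def by simp
    finally show "a = b" .
  qed
  have Req: "Ub \<union> pb ` Ub = Rb"
  proof
    show "Ub \<union> pb ` Ub \<subseteq> Rb"
    proof
      fix X assume "X \<in> Ub \<union> pb ` Ub"
      then show "X \<in> Rb"
      proof
        assume "X \<in> Ub" then show ?thesis unfolding Ub_def Rb_def by blast
      next
        assume "X \<in> pb ` Ub"
        then obtain t where t: "t \<in> Ub" "X = pb t" by blast
        then have t': "t \<in> Mc K" "Inr -` t \<noteq> {}" unfolding Ub_def by auto
        have e1: "Inr -` pb t = Inr -` t" unfolding pb_def by (rule ww_ins)
        show ?thesis unfolding Rb_def t(2) using pb_Mc[OF t'] t'(2) e1 by simp
      qed
    qed
  next
    show "Rb \<subseteq> Ub \<union> pb ` Ub"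
    proof
      fix X assume "X \<in> Rb"
      then have X: "X \<in> Mc K" and ne: "Inr -` X \<noteq> {}" unfolding Rb_def by auto
      show "X \<in> Ub \<union> pb ` Ub"
      proof (cases "ww X \<in> X")
        case False then show ?thesis unfolding Ub_def using X ne by blast
      next
        case True
        define X0 where "X0 = X - {ww X}"
        have e2: "Inr -` X0 = Inr -` X" unfolding X0_def by (rule ww_del)
        have e1: "Inl -` X0 \<subseteq> Inl -` X" unfolding X0_def by blast
        note CC = Mc_C2[OF X ne]
        have "X0 \<in> Mc K" unfolding Mc_iff e2 using CC e1 by blast
        moreover have wq: "ww X0 = ww X" using ww_eq[OF e2] .
        moreover have "ww X \<notin> X0" unfolding X0_def by simp
        ultimately have "X0 \<in> Ub" unfolding Ub_def using e2 ne by simp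
        moreover have "pb X0 = X" unfolding pb_def wq using True X0_def by auto
        ultimately show ?thesis by blast
      qed
    qed
  qed
  have up: "\<forall>\<rho>\<in>Ub \<union> pb ` Ub. \<forall>\<rho>'\<in>Mc K. \<rho> \<subseteq> \<rho>' \<longrightarrow> \<rho>' \<in> Ub \<union> pb ` Ub"
    unfolding Req
  proof (intro ballI impI)
    fix r r' assume "r \<in> Rb" "r' \<in> Mc K" "r \<subseteq> r'"
    then show "r' \<in> Rb" unfolding Rb_def by blast
  qed
  define rk where "rk X = (card (Inr -` X), card X)" for X :: "('a + 'a set) set"
  have rkh: "\<forall>\<tau>\<in>Ub. \<forall>\<tau>'\<in>Ub. \<tau> \<subset> \<tau>' \<or> (\<tau> \<subset> pb \<tau>' \<and> \<tau> \<noteq> \<tau>') \<longrightarrow> rk \<tau> < rk \<tau>'"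
  proof (intro ballI impI)
    fix a b assume a: "a \<in> Ub" and b: "b \<in> Ub" and h: "a \<subset> b \<or> (a \<subset> pb b \<and> a \<noteq> b)"
    have bM: "b \<in> Mc K" using b unfolding Ub_def by blast
    have eb: "Inr -` pb b = Inr -` b" unfolding pb_def by (rule ww_ins)
    have "a \<subseteq> pb b" using h unfolding pb_def by blast
    then have "Inr -` a \<subseteq> Inr -` pb b" by blast
    then have sub: "Inr -` a \<subseteq> Inr -` b" using eb by simp
    have fb: "finite (Inr -` b)" using Mc_C[OF bM] by simp
    have fb2: "finite b" using Mc_finite_face[OF bM] .
    show "rk a < rk b"
    proof (cases "Inr -` a = Inr -` b")
      case False
      then have "card (Inr -` a) < card (Inr -` b)" using sub fb by (simp add: psubset_card_mono)
      then show ?thesis unfolding rk_def by simp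
    next
      case True
      have "a \<subset> b"
      proof (cases "a \<subset> b")
        case False
        then have "a \<subseteq> insert (ww b) b" "a \<noteq> b" using h unfolding pb_def by auto
        moreover have "ww b \<notin> a" using a ww_eq[OF True] unfolding Ub_def by simp
        ultimately show ?thesis by blast
      qed simp
      then have "card a < card b" using fb2 by (simp add: psubset_card_mono)
      then show ?thesis unfolding rk_def using True by simp
    qed
  qed
  have "collapses (Mc K) (Mc K - (Ub \<union> pb ` Ub))"
    by (rule matching_collapse[OF Mc_sc UB pU inj up rkh])
  then show ?thesis unfolding Req Mc_minus_Rb .
qed

end

lemma coll_S1: "collapses A B \<Longrightarrow> (\<lambda>A B. elementary_collapse A B \<or> elementary_collapse B A)\<^sup>*\<^sup>* A B"
  unfolding collapses_def by (induction rule: rtranclp_induct) (auto intro: rtranclp.rtrancl_into_rtrancl)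

lemma coll_S2: "collapses A B \<Longrightarrow> (\<lambda>A B. elementary_collapse A B \<or> elementary_collapse B A)\<^sup>*\<^sup>* B A"
  unfolding collapses_def
proof (induction rule: rtranclp_induct)
  case base then show ?case by simp
next
  case (step y z)
  then show ?case by (auto intro: converse_rtranclp_into_rtranclp)
qed

context lov
begin

lemma nc_sc: "simplicial_complex K"
proof (rule sc_intro)
  show "finite K" by (rule finK)
next
  fix s assume "s \<in> K"
  then show "finite s" "s \<noteq> {}" using K_sub finV finite_subset by blast+
next
  fix s t assume s: "s \<in> K" and t: "t \<noteq> {}" "t \<subseteq> s"
  have "Nb s \<subseteq> Nb t" using Nb_anti[OF t(2)] .
  then show "t \<in> K" using K_sub[OF s] t unfolding neighborhood_complex_def by auto
qed

lemma lo_sub: "lovasz_complex V E \<subseteq> order_complex K"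
  using Bd_minus_R unfolding Bd_def by blast

theorem main_both:
  "collapses (barycentric_subdivision K) (lovasz_complex V E)
     \<and> simple_homotopy_equivalent K (lovasz_complex V E)"
proof
  show c3: "collapses (barycentric_subdivision K) (lovasz_complex V E)" by (rule lovasz_collapse)
  interpret C: cplx K by (unfold_locales) (rule nc_sc)
  have c1: "collapses (Mc K) ((`) Inl ` K)" by (rule C.collapse_b)
  have c2: "collapses (Mc K) ((`) Inr ` order_complex K)" by (rule C.collapse_a)
  have c3': "collapses ((`) Inr ` order_complex K) ((`) Inr ` lovasz_complex V E)"
  proof -
    have e: "barycentric_subdivision K = order_complex K"
      by (simp only: barycentric_subdivision_def face_poset_def)
    show ?thesis using collapses_image[OF c3 inj_Inr] unfolding e .
  qed
  have c4: "collapses (Mc K) ((`) Inr ` lovasz_complex V E)" by (rule collapses_trans[OF c2 c3'])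
  have fin: "finite (\<Union>(Mc K))" by (rule sc_Union_finite[OF C.Mc_sc])
  obtain h :: "'a + 'a set \<Rightarrow> nat" where hinj: "inj_on h (\<Union>(Mc K))"
  proof -
    from finite_imp_inj_to_nat_seg[OF fin] obtain f :: "'a + 'a set \<Rightarrow> nat" and n
      where "f ` \<Union>(Mc K) = {i. i < n} \<and> inj_on f (\<Union>(Mc K))" by (elim exE)
    then show thesis using that by (elim conjE)
  qed
  have d1: "collapses ((`) h ` Mc K) ((`) h ` (`) Inl ` K)" by (rule collapses_image[OF c1 hinj])
  have d2: "collapses ((`) h ` Mc K) ((`) h ` (`) Inr ` lovasz_complex V E)"
    by (rule collapses_image[OF c4 hinj])
  have eq1: "(`) h ` (`) Inl ` K = (`) (h \<circ> Inl) ` K" by (simp add: image_image image_comp)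
  have eq2: "(`) h ` (`) Inr ` lovasz_complex V E = (`) (h \<circ> Inr) ` lovasz_complex V E"
    by (simp add: image_image image_comp)
  have McB: "(`) Inl ` K \<subseteq> Mc K" using C.Mc_minus_Rb by blast
  have McA: "(`) Inr ` order_complex K \<subseteq> Mc K" using C.Mc_minus_Ra by blast
  have s1: "Inl ` \<Union>K \<subseteq> \<Union>(Mc K)"
  proof
    fix x :: "'a + 'a set" assume "x \<in> Inl ` \<Union>K"
    then obtain v s where "s \<in> K" "v \<in> s" "x = Inl v" by blast
    then have "x \<in> Inl ` s" "Inl ` s \<in> Mc K" using McB by auto
    then show "x \<in> \<Union>(Mc K)" by blast
  qed
  have s2: "Inr ` \<Union>(lovasz_complex V E) \<subseteq> \<Union>(Mc K)"
  proof
    fix x :: "'a + 'a set" assume "x \<in> Inr ` \<Union>(lovasz_complex V E)"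
    then obtain v s where "s \<in> lovasz_complex V E" "v \<in> s" "x = Inr v" by blast
    then have "x \<in> Inr ` s" "Inr ` s \<in> Mc K" using McA lo_sub by auto
    then show "x \<in> \<Union>(Mc K)" by blast
  qed
  have i1: "inj_on (h \<circ> Inl) (\<Union>K)"
    by (rule comp_inj_on) (use inj_on_subset[OF hinj s1] in simp_all)
  have i2: "inj_on (h \<circ> Inr) (\<Union>(lovasz_complex V E))"
    by (rule comp_inj_on) (use inj_on_subset[OF hinj s2] in simp_all)
  have r1: "(\<lambda>A B. elementary_collapse A B \<or> elementary_collapse B A)\<^sup>*\<^sup>*
      ((`) (h \<circ> Inl) ` K) ((`) h ` Mc K)"
    using coll_S2[OF d1] unfolding eq1 .
  have r2: "(\<lambda>A B. elementary_collapse A B \<or> elementary_collapse B A)\<^sup>*\<^sup>*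
      ((`) h ` Mc K) ((`) (h \<circ> Inr) ` lovasz_complex V E)"
    using coll_S1[OF d2] unfolding eq2 .
  show "simple_homotopy_equivalent K (lovasz_complex V E)"
    unfolding simple_homotopy_equivalent_def
    using i1 i2 rtranclp_trans[OF r1 r2] by blast
qed

end

theorem mainTheorem1:
  fixes V :: "'a set" and E :: "'a \<Rightarrow> 'a \<Rightarrow> bool"
  assumes "finite_graph V E"
  shows "collapses (barycentric_subdivision (neighborhood_complex V E)) (lovasz_complex V E)
     \<and> simple_homotopy_equivalent (neighborhood_complex V E) (lovasz_complex V E)"
proof -
  interpret L: lov V E by (unfold_locales) (rule assms)
  show ?thesis by (rule L.main_both)
qed

end
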